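(* Let $c\ge 2$ be an integer with $\omega\ge 1$ distinct prime factors. Then for every real $x>0$, $$\frac{\varphi(c)}{x}-2^{\omega-1}<E_c(x)<\frac{\varphi(c)}{x}+2^{\omega-1}.$$
   Context: $\varphi$ is Euler's totient function. For a positive integer $c$ with distinct prime factors $q_1,\dots,q_\omega$ and real $x\ne 0$, $$E_c(x)=\sum_{S\subseteq\{1,\dots,\omega\}}(-1)^{|S|}\left\lfloor \frac{c}{x\prod_{i\in S}q_i}\right\rfloor.$$ *)

theory Defs
  imports "HOL-Analysis.Analysis" "HOL-Number_Theory.Number_Theory"
begin

definition E :: "nat \<Rightarrow> real \<Rightarrow> int" where
  "E c x = (\<Sum>S\<in>Pow (prime_factors c).
      (-1) ^ card S * \<lfloor>real c / (x * real (\<Prod>q\<in>S. q))\<rfloor>)"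

end

theory Submission
  imports Defs
begin

lemma alt_bound:
  fixes h :: "nat set \<Rightarrow> real"
  assumes fin: "finite Q" and pQ: "p \<notin> Q"
    and h0: "\<And>S. 0 \<le> h S" and h1: "\<And>S. h S < 1"
  shows "\<bar>\<Sum>S\<in>Pow (insert p Q). (-1) ^ card S * h S\<bar> < 2 ^ card Q"
proof -
  have fin2: "\<And>S. S \<in> Pow Q \<Longrightarrow> finite S" using fin finite_subset by blast
  have "(\<Sum>S\<in>Pow (insert p Q). (-1) ^ card S * h S) =
        (\<Sum>S\<in>Pow Q. (-1) ^ card S * h S) + (\<Sum>S\<in>insert p ` Pow Q. (-1) ^ card S * h S)"
    unfolding Pow_insert by (rule sum.union_disjoint) (use pQ fin in auto)
  also have "(\<Sum>S\<in>insert p ` Pow Q. (-1) ^ card S * h S) =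
      (\<Sum>S\<in>Pow Q. (-1) ^ card (insert p S) * h (insert p S))"
    by (subst sum.reindex) (use pQ in \<open>auto intro!: inj_onI simp: o_def\<close>)
  also have "\<dots> = (\<Sum>S\<in>Pow Q. - ((-1) ^ card S * h (insert p S)))"
  proof (rule sum.cong)
    fix S assume S: "S \<in> Pow Q"
    then have "p \<notin> S" using pQ by auto
    then show "(-1) ^ card (insert p S) * h (insert p S) = - ((-1) ^ card S * h (insert p S))"
      using fin2[OF S] by simp
  qed simp
  finally have eq: "(\<Sum>S\<in>Pow (insert p Q). (-1) ^ card S * h S) =
      (\<Sum>S\<in>Pow Q. (-1) ^ card S * (h S - h (insert p S)))"
    by (simp add: sum.distrib[symmetric] sum_negf[symmetric] algebra_simps)
  have "\<bar>\<Sum>S\<in>Pow Q. (-1) ^ card S * (h S - h (insert p S))\<bar>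
      \<le> (\<Sum>S\<in>Pow Q. \<bar>(-1) ^ card S * (h S - h (insert p S))\<bar>)"
    by (rule sum_abs)
  also have "\<dots> < (\<Sum>S\<in>Pow Q. (1::real))"
  proof (rule sum_strict_mono)
    show "finite (Pow Q)" using fin by simp
    show "Pow Q \<noteq> {}" by auto
    fix S
    have "\<bar>h S - h (insert p S)\<bar> < 1" using h0[of S] h1[of S] h0[of "insert p S"] h1[of "insert p S"] by linarith
    then show "\<bar>(-1) ^ card S * (h S - h (insert p S))\<bar> < 1"
      by (simp add: abs_mult)
  qed
  also have "\<dots> = 2 ^ card Q" using fin by (simp add: card_Pow)
  finally show ?thesis using eq by simp
qed

lemma main_identity:
  fixes c :: nat and x :: real
  shows "(\<Sum>S\<in>Pow (prime_factors c). (-1) ^ card S * (real c / (x * real (\<Prod>q\<in>S. q))))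
         = real (totient c) / x"
proof -
  let ?P = "prime_factors c"
  have fin: "finite ?P" by simp
  have "real (totient c) / x = (real c / x) * (\<Prod>p\<in>?P. (- 1 / real p) + 1)"
    by (simp add: totient_formula2)
  also have "(\<Prod>p\<in>?P. (- 1 / real p) + 1) = (\<Sum>S\<in>Pow ?P. (\<Prod>p\<in>S. - 1 / real p) * (\<Prod>p\<in>?P - S. 1))"
    by (rule prod_add[OF fin])
  also have "\<dots> = (\<Sum>S\<in>Pow ?P. (-1) ^ card S / real (\<Prod>q\<in>S. q))"
  proof (rule sum.cong)
    fix S assume S: "S \<in> Pow ?P"
    have "(\<Prod>p\<in>S. - 1 / real p) = (\<Prod>p\<in>S. - 1) / (\<Prod>p\<in>S. real p)"
      by (rule prod_dividef)
    then show "(\<Prod>p\<in>S. - 1 / real p) * (\<Prod>p\<in>?P - S. 1) = (-1) ^ card S / real (\<Prod>q\<in>S. q)"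
      by simp
  qed simp
  finally show ?thesis
    by (simp add: sum_distrib_left) (rule sum.cong; simp add: field_simps)
qed

theorem lemma1:
  fixes c :: nat and x :: real
  assumes "c \<ge> 2" and "card (prime_factors c) \<ge> 1" and "x > 0"
  shows "real (totient c) / x - 2 ^ (card (prime_factors c) - 1) < real_of_int (E c x)
       \<and> real_of_int (E c x) < real (totient c) / x + 2 ^ (card (prime_factors c) - 1)"
proof -
  let ?P = "prime_factors c"
  define F where "F S = real c / (x * real (\<Prod>q\<in>S. q))" for S :: "nat set"
  have "?P \<noteq> {}" using assms(2) by auto
  then obtain p where p: "p \<in> ?P" by blast
  define Q where "Q = ?P - {p}"
  have PQ: "?P = insert p Q" and pQ: "p \<notin> Q" and finQ: "finite Q" using p by (auto simp: Q_def)
  have cQ: "card Q = card ?P - 1" using p by (simp add: Q_def)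
  have "real_of_int (E c x) = (\<Sum>S\<in>Pow ?P. (-1) ^ card S * real_of_int \<lfloor>F S\<rfloor>)"
    by (simp add: E_def F_def)
  also have "\<dots> = (\<Sum>S\<in>Pow ?P. (-1) ^ card S * F S) - (\<Sum>S\<in>Pow ?P. (-1) ^ card S * frac (F S))"
    by (simp add: sum_subtractf[symmetric] frac_def algebra_simps)
  also have "(\<Sum>S\<in>Pow ?P. (-1) ^ card S * F S) = real (totient c) / x"
    unfolding F_def by (rule main_identity)
  finally have eq: "real_of_int (E c x) = real (totient c) / x - (\<Sum>S\<in>Pow ?P. (-1) ^ card S * frac (F S))" .
  have "\<bar>\<Sum>S\<in>Pow ?P. (-1) ^ card S * frac (F S)\<bar> < 2 ^ card Q"
    unfolding PQ by (rule alt_bound[OF finQ pQ]) (auto simp: frac_lt_1)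
  then show ?thesis unfolding eq cQ by linarith
qed

end
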